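(* Let $\alpha,\beta,\gamma\in\mathbb{Z}[i]$ satisfy $\alpha^2+\beta^2+\gamma^2=0$, $\alpha\beta\gamma\neq0$, $\gcd(\alpha,\beta,\gamma)\in U$, and suppose $\alpha=i^m\alpha'$, $\beta=i^n(1+i)^{2+k}\beta'$, $\gamma=i^l\gamma'$ where $m,n,l\in\{0,1\}$, $k\ge0$ is an integer, and $\alpha',\beta',\gamma'\in O^I$. Then $m+l\equiv1\pmod 2$.
   Context: $\mathbb{Z}[i]$ is the ring of Gaussian integers, $U=\{1,-1,i,-i\}$ its unit group; $R(\alpha),I(\alpha)$ are real and imaginary parts. $O=\{\alpha: R(\alpha)+I(\alpha)\equiv1\pmod 2\}$, $O^I=\{\alpha\in O: R(\alpha)\equiv 1\pmod 4\}$. *)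

theory Defs
  imports Complex_Main
begin

definition gaussian_ints :: "complex set" where
  "gaussian_ints = {complex_of_int a + \<i> * complex_of_int b | a b. True}"

definition gdvd :: "complex \<Rightarrow> complex \<Rightarrow> bool" where
  "gdvd d x \<longleftrightarrow> (\<exists>q\<in>gaussian_ints. x = d * q)"

definition gunits :: "complex set" where
  "gunits = {1, -1, \<i>, -\<i>}"

definition gcd3_is_unit :: "complex \<Rightarrow> complex \<Rightarrow> complex \<Rightarrow> bool" where
  "gcd3_is_unit a b c \<longleftrightarrow>
     (\<forall>d\<in>gaussian_ints. gdvd d a \<and> gdvd d b \<and> gdvd d c \<longrightarrow> d \<in> gunits)"

definition O_I :: "complex set" where
  "O_I = {complex_of_int a + \<i> * complex_of_int b | a b. odd (a + b) \<and> a mod 4 = 1}"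

end

theory Submission
  imports Defs
begin

lemma gi_mult: "x \<in> gaussian_ints \<Longrightarrow> y \<in> gaussian_ints \<Longrightarrow> x * y \<in> gaussian_ints"
proof -
  assume "x \<in> gaussian_ints" "y \<in> gaussian_ints"
  then obtain a b c d where x: "x = complex_of_int a + \<i> * complex_of_int b"
    and y: "y = complex_of_int c + \<i> * complex_of_int d" unfolding gaussian_ints_def by blast
  have "x * y = complex_of_int (a*c - b*d) + \<i> * complex_of_int (a*d + b*c)"
    by (simp add: x y algebra_simps complex_eq_iff)
  then show ?thesis unfolding gaussian_ints_def by blast
qed

lemma gi_pow: "x \<in> gaussian_ints \<Longrightarrow> x ^ k \<in> gaussian_ints"
proof (induction k)
  case 0
  have "(1::complex) = complex_of_int 1 + \<i> * complex_of_int 0" by simp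
  then have "(1::complex) \<in> gaussian_ints" unfolding gaussian_ints_def by blast
  then show ?case by simp
next
  case (Suc k) then show ?case by (simp add: gi_mult)
qed

lemma gi_i: "\<i> \<in> gaussian_ints"
proof -
  have "\<i> = complex_of_int 0 + \<i> * complex_of_int 1" by simp
  then show ?thesis unfolding gaussian_ints_def by blast
qed

lemma gi_2i: "2*\<i> \<in> gaussian_ints"
proof -
  have "2*\<i> = complex_of_int 0 + \<i> * complex_of_int 2" by simp
  then show ?thesis unfolding gaussian_ints_def by blast
qed

lemma OI_sq:
  assumes "x \<in> O_I"
  shows "\<exists>a b. Re (x^2) = of_int (a^2 - b^2) \<and> a mod 4 = 1 \<and> even b"
proof -
  obtain a b where x: "x = complex_of_int a + \<i> * complex_of_int b" and "odd (a+b)" "a mod 4 = 1"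
    using assms unfolding O_I_def by blast
  then have "even b" by presburger
  have "Re (x^2) = of_int (a^2 - b^2)" by (simp add: x power2_eq_square)
  then show ?thesis using \<open>a mod 4 = 1\<close> \<open>even b\<close> by blast
qed

lemma mod4: assumes "a mod 4 = (1::int)" "even (b::int)" "e mod 4 = 1" "even (f::int)"
  shows "(a^2 - b^2 + (e^2 - f^2)) mod 4 = 2"
proof -
  obtain a' where a: "a = 4*a' + 1" using assms(1) by (metis mult.commute div_mult_mod_eq add.commute)
  obtain e' where e: "e = 4*e' + 1" using assms(3) by (metis mult.commute div_mult_mod_eq add.commute)
  obtain b' where b: "b = 2*b'" using assms(2) by blast
  obtain f' where f: "f = 2*f'" using assms(4) by blast
  have "a^2 - b^2 + (e^2 - f^2) = 2 + 4*(4*a'^2 + 2*a' - b'^2 + 4*e'^2 + 2*e' - f'^2)"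
    by (simp add: a b e f power2_eq_square algebra_simps)
  moreover have "\<And>t::int. (2 + 4*t) mod 4 = 2" by presburger
  ultimately show ?thesis by metis
qed

theorem lemma4p2:
  fixes \<alpha> \<beta> \<gamma> \<alpha>' \<beta>' \<gamma>' :: complex and m n l k :: nat
  assumes "\<alpha> \<in> gaussian_ints" "\<beta> \<in> gaussian_ints" "\<gamma> \<in> gaussian_ints"
    and "\<alpha>^2 + \<beta>^2 + \<gamma>^2 = 0"
    and "\<alpha> * \<beta> * \<gamma> \<noteq> 0"
    and "gcd3_is_unit \<alpha> \<beta> \<gamma>"
    and "m \<in> {0,1}" "n \<in> {0,1}" "l \<in> {0,1}"
    and "\<alpha>' \<in> O_I" "\<beta>' \<in> O_I" "\<gamma>' \<in> O_I"
    and "\<alpha> = \<i>^m * \<alpha>'"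
    and "\<beta> = \<i>^n * (1 + \<i>)^(2 + k) * \<beta>'"
    and "\<gamma> = \<i>^l * \<gamma>'"
  shows "odd (m + l)"
proof (rule ccontr)
  assume ev: "\<not> odd (m + l)"
  have ml: "m = l" using ev assms(7,9) by auto
  have b'gi: "\<beta>' \<in> gaussian_ints" using assms(11) unfolding O_I_def gaussian_ints_def by blast
  define w where "w = \<i>^(2*n) * (2*\<i>)^k * \<beta>'^2"
  have wgi: "w \<in> gaussian_ints" unfolding w_def
    by (intro gi_mult gi_pow gi_i gi_2i b'gi)
  then obtain p q where w: "w = complex_of_int p + \<i> * complex_of_int q"
    unfolding gaussian_ints_def by blast
  have sq: "(1 + \<i>)^2 = 2*\<i>" by (simp add: power2_eq_square algebra_simps)
  have "(1 + \<i>)^(2*(2+k)) = ((1 + \<i>)^2)^(2+k)" by (simp only: power_mult)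
  also have "\<dots> = (2*\<i>)^(2+k)" by (simp only: sq)
  also have "\<dots> = (2*\<i>)^2 * (2*\<i>)^k" by (simp only: power_add)
  also have "\<dots> = -4 * (2*\<i>)^k" by (simp add: power2_eq_square)
  finally have p1: "(1 + \<i>)^(2*(2+k)) = -4 * (2*\<i>)^k" .
  have "\<beta>^2 = \<i>^(2*n) * (1 + \<i>)^(2*(2+k)) * \<beta>'^2"
  proof -
    have "\<beta>^2 = (\<i>^n)^2 * ((1 + \<i>)^(2+k))^2 * \<beta>'^2"
      by (simp only: assms(14) power_mult_distrib)
    also have "\<dots> = \<i>^(2*n) * (1 + \<i>)^(2*(2+k)) * \<beta>'^2"
      by (simp only: power_mult[symmetric] mult.commute)
    finally show ?thesis .
  qed
  then have "\<beta>^2 = \<i>^(2*n) * (-4 * (2*\<i>)^k) * \<beta>'^2" by (simp only: p1)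
  moreover have "\<i>^(2*n) * (-4 * (2*\<i>)^k) * \<beta>'^2 = -4 * w" unfolding w_def by (simp only: mult_ac)
  ultimately have bsq: "\<beta>^2 = -4 * w" by (rule trans)
  have im: "\<i>^(2*m) = (-1::complex)^m" by (simp add: power_mult)
  have asq: "\<alpha>^2 = (-1)^m * \<alpha>'^2"
    by (simp add: assms(13) power_mult_distrib power_mult[symmetric] im mult.commute)
  have gsq: "\<gamma>^2 = (-1)^m * \<gamma>'^2"
    by (simp add: assms(15) ml[symmetric] power_mult_distrib power_mult[symmetric] im mult.commute)
  obtain a b where ab: "Re (\<alpha>'^2) = of_int (a^2 - b^2)" "a mod 4 = 1" "even b"
    using OI_sq[OF assms(10)] by blast
  obtain e f where ef: "Re (\<gamma>'^2) = of_int (e^2 - f^2)" "e mod 4 = 1" "even f"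
    using OI_sq[OF assms(12)] by blast
  have eq: "(-1)^m * (\<alpha>'^2 + \<gamma>'^2) = 4 * w"
    using assms(4) asq bsq gsq by (simp add: algebra_simps)
  define s where "s = a^2 - b^2 + (e^2 - f^2)"
  have re: "Re ((-1)^m * (\<alpha>'^2 + \<gamma>'^2)) = 4 * real_of_int p"
    using eq by (simp add: w)
  have rs: "Re (\<alpha>'^2 + \<gamma>'^2) = real_of_int s"
    using ab(1) ef(1) by (simp add: s_def)
  have s4: "s mod 4 = 2" unfolding s_def by (rule mod4[OF ab(2,3) ef(2,3)])
  have "s = 4 * p \<or> - s = 4 * p"
  proof (cases "m = 0")
    case True
    then have "real_of_int s = real_of_int (4 * p)" using re rs by simp
    then show ?thesis using of_int_eq_iff by blast
  next
    case False
    then have "m = 1" using assms(7) by auto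
    then have "real_of_int (- s) = real_of_int (4 * p)" using re rs by simp
    then show ?thesis using of_int_eq_iff by blast
  qed
  then show False using s4 by presburger
qed

end
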